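(* Let $\mathfrak g$ be a finite-dimensional nilpotent Lie algebra over a field $k$ of characteristic zero. If $\mathfrak g$ admits an LR-structure, then $\mathfrak g$ also admits a complete LR-structure.
   Context: An LR-algebra is a vector space $A$ with a bilinear product $\cdot$ satisfying $x\cdot(y\cdot z)=y\cdot(x\cdot z)$ and $(x\cdot y)\cdot z=(x\cdot z)\cdot y$ for all $x,y,z\in A$. An LR-structure on a Lie algebra $\mathfrak g$ is an LR-algebra product $\cdot$ on the underlying vector space of $\mathfrak g$ such that $x\cdot y-y\cdot x=[x,y]$ for all $x,y$. With $R(x)y=y\cdot x$, an LR-structure is called complete if $R(x)$ is nilpotent for every $x$. *)

theory Defs
  imports Main "HOL.Vector_Spaces"
begin

text \<open>A Lie algebra is modelled on the whole carrier type 'v, which is a vector space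
  over the field 'k via the scalar multiplication scale (library locale vector_space).\<close>

definition bilinear_map :: "('k::field \<Rightarrow> 'v::ab_group_add \<Rightarrow> 'v) \<Rightarrow> ('v \<Rightarrow> 'v \<Rightarrow> 'v) \<Rightarrow> bool" where
  "bilinear_map scale p \<longleftrightarrow>
     (\<forall>x y z. p (x + y) z = p x z + p y z) \<and>
     (\<forall>x y z. p x (y + z) = p x y + p x z) \<and>
     (\<forall>a x y. p (scale a x) y = scale a (p x y)) \<and>
     (\<forall>a x y. p x (scale a y) = scale a (p x y))"

definition lie_algebra :: "('k::field \<Rightarrow> 'v::ab_group_add \<Rightarrow> 'v) \<Rightarrow> ('v \<Rightarrow> 'v \<Rightarrow> 'v) \<Rightarrow> bool" where
  "lie_algebra scale br \<longleftrightarrow>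
     vector_space scale \<and> bilinear_map scale br \<and>
     (\<forall>x. br x x = 0) \<and>
     (\<forall>x y z. br x (br y z) + br y (br z x) + br z (br x y) = 0)"

definition finite_dimensional :: "('k::field \<Rightarrow> 'v::ab_group_add \<Rightarrow> 'v) \<Rightarrow> bool" where
  "finite_dimensional scale \<longleftrightarrow> (\<exists>B. finite B \<and> module.span scale B = UNIV)"

primrec lower_central_series ::
  "('k::field \<Rightarrow> 'v::ab_group_add \<Rightarrow> 'v) \<Rightarrow> ('v \<Rightarrow> 'v \<Rightarrow> 'v) \<Rightarrow> nat \<Rightarrow> 'v set" where
  "lower_central_series scale br 0 = UNIV"
| "lower_central_series scale br (Suc n) =
     module.span scale {br x y | x y. y \<in> lower_central_series scale br n}"

definition nilpotent_lie :: "('k::field \<Rightarrow> 'v::ab_group_add \<Rightarrow> 'v) \<Rightarrow> ('v \<Rightarrow> 'v \<Rightarrow> 'v) \<Rightarrow> bool" where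
  "nilpotent_lie scale br \<longleftrightarrow> (\<exists>n. lower_central_series scale br n = {0})"

definition LR_structure ::
  "('k::field \<Rightarrow> 'v::ab_group_add \<Rightarrow> 'v) \<Rightarrow> ('v \<Rightarrow> 'v \<Rightarrow> 'v) \<Rightarrow> ('v \<Rightarrow> 'v \<Rightarrow> 'v) \<Rightarrow> bool" where
  "LR_structure scale br p \<longleftrightarrow>
     bilinear_map scale p \<and>
     (\<forall>x y z. p x (p y z) = p y (p x z)) \<and>
     (\<forall>x y z. p (p x y) z = p (p x z) y) \<and>
     (\<forall>x y. p x y - p y x = br x y)"

definition complete_LR_structure ::
  "('k::field \<Rightarrow> 'v::ab_group_add \<Rightarrow> 'v) \<Rightarrow> ('v \<Rightarrow> 'v \<Rightarrow> 'v) \<Rightarrow> ('v \<Rightarrow> 'v \<Rightarrow> 'v) \<Rightarrow> bool" where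
  "complete_LR_structure scale br p \<longleftrightarrow>
     LR_structure scale br p \<and> (\<forall>x. \<exists>n. ((\<lambda>y. p y x) ^^ n) = (\<lambda>_. 0))"

end

theory Submission imports Defs begin


context vector_space begin

definition lin :: "('b \<Rightarrow> 'b) \<Rightarrow> bool" where
  "lin f \<longleftrightarrow> (\<forall>x y. f (x+y) = f x + f y) \<and> (\<forall>c x. f (scale c x) = scale c (f x))"

lemma lin_add: "lin f \<Longrightarrow> f (x+y) = f x + f y" by (simp add: lin_def)
lemma lin_scale: "lin f \<Longrightarrow> f (scale c x) = scale c (f x)" by (simp add: lin_def)
lemma lin_0: "lin f \<Longrightarrow> f 0 = 0"
  by (metis add_cancel_right_left add_0 lin_add)
lemma lin_minus: "lin f \<Longrightarrow> f (- x) = - f x"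
  by (metis add.right_inverse lin_0 lin_add neg_eq_iff_add_eq_0)
lemma lin_diff: "lin f \<Longrightarrow> f (x - y) = f x - f y"
  by (metis diff_conv_add_uminus lin_add lin_minus)
lemma lin_comp: "lin f \<Longrightarrow> lin g \<Longrightarrow> lin (f \<circ> g)"
  by (simp add: lin_def)
lemma lin_id: "lin id" by (simp add: lin_def)
lemma lin_funpow: "lin f \<Longrightarrow> lin (f ^^ n)"
  by (induction n) (auto simp: lin_id lin_comp)
lemma lin_ker: "lin f \<Longrightarrow> subspace {x. f x = 0}"
  by (auto simp: subspace_def lin_0 lin_add lin_scale)
lemma lin_range: "lin f \<Longrightarrow> subspace (range f)"
  unfolding subspace_def
  by (metis (no_types, lifting) lin_0 lin_add lin_scale rangeE rangeI)
lemma funpow_split: "(f^^(a+b)) x = (f^^a) ((f^^b) x)" by (simp add: funpow_add)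

lemma funpow_zero_mono: "lin f \<Longrightarrow> (f ^^ n) x = 0 \<Longrightarrow> n \<le> m \<Longrightarrow> (f ^^ m) x = 0"
proof -
  assume l: "lin f" and h: "(f ^^ n) x = 0" and "n \<le> m"
  then obtain k where m: "m = k + n" by (metis add.commute le_add_diff_inverse)
  have "lin (f^^k)" using l lin_funpow by blast
  then show ?thesis using h by (simp add: m funpow_add lin_0)
qed

end

context finite_dimensional_vector_space begin

lemma fitting:
  assumes l: "lin T"
  shows "\<exists>N. N \<ge> 1 \<and> (\<forall>u. \<exists>w. (T^^N) u = (T^^N) ((T^^N) w)) \<and> (\<forall>u. (T^^N) ((T^^N) u) = 0 \<longrightarrow> (T^^N) u = 0)"
proof -
  define K where "K n = {u. (T^^n) u = 0}" for n
  define I where "I n = range (T^^n)" for n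
  have sK: "subspace (K n)" for n unfolding K_def by (rule lin_ker[OF lin_funpow[OF l]])
  have sI: "subspace (I n)" for n unfolding I_def by (rule lin_range[OF lin_funpow[OF l]])
  have Kmono: "K n \<subseteq> K (Suc n)" for n
    unfolding K_def using l by (auto simp: lin_0)
  have Imono: "I (Suc n) \<subseteq> I n" for n
    unfolding I_def by (auto simp del: funpow.simps simp: funpow_Suc_right)
  have "\<exists>n. K (Suc n) = K n"
  proof (rule ccontr)
    assume "\<nexists>n. K (Suc n) = K n"
    then have "K n \<subset> K (Suc n)" for n using Kmono by blast
    then have lt: "dim (K n) < dim (K (Suc n))" for n
      by (metis dim_psubset span_eq_iff sK)
    have "n \<le> dim (K n)" for n
    proof (induction n)
      case (Suc n) then show ?case using lt[of n] by simp
    qed simp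
    then have "Suc dimension \<le> dimension" using dim_subset_UNIV le_trans by blast
    then show False by simp
  qed
  then obtain n1 where n1: "K (Suc n1) = K n1" by blast
  have Kst: "K (m + n1) = K n1" for m
  proof (induction m)
    case (Suc m)
    have "K (Suc m + n1) \<subseteq> K (m + n1)"
    proof
      fix u assume "u \<in> K (Suc m + n1)"
      then have "(T^^(Suc n1 + m)) u = 0" unfolding K_def by (simp add: add.commute)
      then have "(T^^(Suc n1)) ((T^^m) u) = 0" by (simp only: funpow_split)
      then have "(T^^n1) ((T^^m) u) = 0" using n1 unfolding K_def by blast
      then have "(T^^(n1 + m)) u = 0" by (simp only: funpow_split)
      then show "u \<in> K (m + n1)" unfolding K_def by (simp add: add.commute)
    qed
    then show ?case using Kmono[of "m+n1"] Suc by simp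
  qed simp
  have "\<exists>n. I (Suc n) = I n"
  proof (rule ccontr)
    assume "\<nexists>n. I (Suc n) = I n"
    then have "I (Suc n) \<subset> I n" for n using Imono by blast
    then have lt: "dim (I (Suc n)) < dim (I n)" for n
      by (metis dim_psubset span_eq_iff sI)
    have "dim (I n) + n \<le> dim (I 0)" for n
    proof (induction n)
      case (Suc n) then show ?case using lt[of n] by simp
    qed simp
    then have "dim (I (Suc dimension)) + Suc dimension \<le> dimension"
      using dim_subset_UNIV le_trans by blast
    then show False by simp
  qed
  then obtain n2 where n2: "I (Suc n2) = I n2" by blast
  have Ist: "I (m + n2) = I n2" for m
  proof (induction m)
    case (Suc m)
    have "I (Suc m + n2) = T ` I (m + n2)" unfolding I_def by (simp add: image_comp)
    also have "\<dots> = T ` I n2" using Suc by simp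
    also have "\<dots> = I (Suc n2)" unfolding I_def by (simp add: image_comp)
    finally show ?case using n2 by simp
  qed simp
  define N where "N = max (max n1 n2) 1"
  have K1: "K (N + N) = K N"
    using Kst[of "N + N - n1"] Kst[of "N - n1"] by (simp add: N_def)
  have I1: "I (N + N) = I N"
    using Ist[of "N + N - n2"] Ist[of "N - n2"] by (simp add: N_def)
  show ?thesis
  proof (rule exI[of _ N], intro conjI allI impI)
    show "N \<ge> 1" by (simp add: N_def)
  next
    fix u
    have "(T^^N) u \<in> I (N + N)" using I1 unfolding I_def by auto
    then show "\<exists>w. (T^^N) u = (T^^N) ((T^^N) w)" unfolding I_def
      by (auto simp: funpow_add)
  next
    fix u assume "(T^^N) ((T^^N) u) = 0"
    then have "u \<in> K (N+N)" unfolding K_def by (simp add: funpow_add)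
    then show "(T^^N) u = 0" using K1 unfolding K_def by auto
  qed
qed

end


context vector_space begin

lemma bil_linL: "bilinear_map scale p \<Longrightarrow> lin (\<lambda>z. p x z)"
  by (simp add: bilinear_map_def lin_def)
lemma bil_linR: "bilinear_map scale p \<Longrightarrow> lin (\<lambda>z. p z y)"
  by (simp add: bilinear_map_def lin_def)

definition Zs :: "('b \<Rightarrow> 'b \<Rightarrow> 'b) \<Rightarrow> 'b set" where
  "Zs p = {v. \<forall>y. \<exists>n. ((\<lambda>z. p z y)^^n) v = 0}"

lemma Zs_subspace:
  assumes "bilinear_map scale p" shows "subspace (Zs p)"
proof (rule subspaceI)
  show "0 \<in> Zs p" unfolding Zs_def by (auto intro: exI[of _ 0])
next
  fix x y assume x: "x \<in> Zs p" and y: "y \<in> Zs p"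
  show "x + y \<in> Zs p" unfolding Zs_def mem_Collect_eq
  proof
    fix w
    obtain n1 where n1: "((\<lambda>z. p z w)^^n1) x = 0" using x unfolding Zs_def by blast
    obtain n2 where n2: "((\<lambda>z. p z w)^^n2) y = 0" using y unfolding Zs_def by blast
    have l: "lin ((\<lambda>z. p z w)^^(max n1 n2))" using lin_funpow bil_linR assms by blast
    have "((\<lambda>z. p z w)^^(max n1 n2)) x = 0" using funpow_zero_mono[OF bil_linR[OF assms] n1] by simp
    moreover have "((\<lambda>z. p z w)^^(max n1 n2)) y = 0" using funpow_zero_mono[OF bil_linR[OF assms] n2] by simp
    ultimately show "\<exists>n. ((\<lambda>z. p z w)^^n) (x + y) = 0" using lin_add[OF l] by (intro exI[of _ "max n1 n2"]) simp
  qed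
next
  fix c x assume x: "x \<in> Zs p"
  show "c *s x \<in> Zs p" unfolding Zs_def mem_Collect_eq
  proof
    fix w
    obtain n1 where n1: "((\<lambda>z. p z w)^^n1) x = 0" using x unfolding Zs_def by blast
    have l: "lin ((\<lambda>z. p z w)^^n1)" using lin_funpow bil_linR assms by blast
    show "\<exists>n. ((\<lambda>z. p z w)^^n) (c *s x) = 0" using lin_scale[OF l] n1 by (intro exI[of _ n1]) simp
  qed
qed

end


context finite_dimensional_vector_space begin

lemma step:
  assumes LR: "LR_structure scale br p"
    and adnil: "\<And>y. \<exists>n. \<forall>x. ((\<lambda>z. br y z)^^n) x = 0"
    and v: "\<forall>n. ((\<lambda>z. p z e)^^n) v \<noteq> 0"
  shows "\<exists>q. LR_structure scale br q \<and> Zs p \<subset> Zs q"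
proof -
  have bl: "bilinear_map scale p" using LR by (simp add: LR_structure_def)
  have lc: "\<And>x y z. p x (p y z) = p y (p x z)" using LR by (simp add: LR_structure_def)
  have rc: "\<And>x y z. p (p x y) z = p (p x z) y" using LR by (simp add: LR_structure_def)
  have brp: "\<And>x y. br x y = p x y - p y x" using LR by (simp add: LR_structure_def)
  have linL: "\<And>x. lin (\<lambda>z. p x z)" using bil_linL[OF bl] .
  have linR: "\<And>y. lin (\<lambda>z. p z y)" using bil_linR[OF bl] .
  have pL_add: "\<And>x a b. p x (a + b) = p x a + p x b" using lin_add[OF linL] .
  have pR_add: "\<And>y a b. p (a + b) y = p a y + p b y" using lin_add[OF linR] .
  have pL_diff: "\<And>x a b. p x (a - b) = p x a - p x b" using lin_diff[OF linL] .
  have pR_diff: "\<And>y a b. p (a - b) y = p a y - p b y" using lin_diff[OF linR] .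
  have pL0: "\<And>x. p x 0 = 0" using lin_0[OF linL] .
  have pR0: "\<And>x. p 0 x = 0" using lin_0[OF linR] .
  define T where "T = (\<lambda>z. p z e)"
  have linT: "lin T" unfolding T_def by (rule linR)
  obtain N where N1: "N \<ge> 1" and Na: "\<And>u. \<exists>w. (T^^N) u = (T^^N) ((T^^N) w)"
    and Nb: "\<And>u. (T^^N) ((T^^N) u) = 0 \<Longrightarrow> (T^^N) u = 0"
    using fitting[OF linT] by blast
  define S where "S = T^^N"
  have linS: "lin S" unfolding S_def by (rule lin_funpow[OF linT])
  have TkR: "(T^^k) (p x z) = p ((T^^k) x) z" for k x z
  proof (induction k)
    case (Suc k)
    have "(T^^Suc k) (p x z) = T (p ((T^^k) x) z)" using Suc by simp
    also have "\<dots> = p (T ((T^^k) x)) z" unfolding T_def by (rule rc)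
    finally show ?case by simp
  qed simp
  have SR: "S (p x z) = p (S x) z" for x z unfolding S_def by (rule TkR)
  have LT: "p x ((T^^Suc k) u) = (T^^k) (p u (p x e))" for x k u
  proof -
    have "p x ((T^^Suc k) u) = p x (p ((T^^k) u) e)" by (simp add: T_def)
    also have "\<dots> = p ((T^^k) u) (p x e)" by (rule lc)
    also have "\<dots> = (T^^k) (p u (p x e))" by (rule TkR[symmetric])
    finally show ?thesis .
  qed
  have NN: "N + N = Suc (N + (N - 1))" using N1 by simp
  have F3: "p x (S y) \<in> range S" for x y
  proof -
    obtain w where w: "S y = S (S w)" using Na unfolding S_def by blast
    have "S (S w) = (T^^(Suc (N + (N - 1)))) w" unfolding S_def
      by (simp only: funpow_split[symmetric] NN)
    then have "p x (S y) = (T^^(N + (N - 1))) (p w (p x e))" using w LT by simp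
    also have "\<dots> = S ((T^^(N - 1)) (p w (p x e)))" unfolding S_def by (rule funpow_split)
    finally have "p x (S y) = S ((T^^(N - 1)) (p w (p x e)))" .
    then show ?thesis by (metis rangeI)
  qed
  have uniq: "a = 0" if a1: "a \<in> range S" and a2: "S a = 0" for a
  proof -
    obtain y where y: "a = S y" using a1 by blast
    then show ?thesis using Nb[of y] a2 unfolding S_def by simp
  qed
  have F4: "S (p a z) = 0" if "S a = 0" for a z using that SR pR0 by simp
  have F5: "p a b = 0" if a0: "S a = 0" and b1: "b \<in> range S" for a b
  proof -
    obtain y where y: "b = S y" using b1 by blast
    show ?thesis using uniq[OF F3[of a y] F4[OF a0]] y by simp
  qed
  have F6: "p b z \<in> range S" if b1: "b \<in> range S" for b z
  proof -
    obtain y where y: "b = S y" using b1 by blast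
    have "p b z = S (p y z)" using SR y by simp
    then show ?thesis by (metis rangeI)
  qed
  have TS: "\<exists>x'. x = T x'" if "x \<in> range S" for x
  proof -
    obtain y where y: "x = S y" using \<open>x \<in> range S\<close> by blast
    obtain w where w: "S y = S (S w)" using Na unfolding S_def by blast
    have "S (S w) = (T^^(Suc (N + (N - 1)))) w" unfolding S_def
      by (simp only: funpow_split[symmetric] NN)
    then have "x = T ((T^^(N+(N-1))) w)" using y w by simp
    then show ?thesis by (rule exI)
  qed
  have F7: "p x y = p y x" if "x \<in> range S" "y \<in> range S" for x y
  proof -
    obtain x' where x': "x = T x'" using TS \<open>x \<in> range S\<close> by blast
    obtain z where z: "y = T z" using TS \<open>y \<in> range S\<close> by blast
    have 1: "p x y = p z (T x)" unfolding z T_def by (rule lc)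
    have 2: "p y x = T (p z x)" unfolding z T_def by (rule rc)
    have "p z (T x) = p z (p (T x') e)" unfolding x' T_def ..
    also have "\<dots> = p (T x') (p z e)" by (rule lc)
    also have "\<dots> = p (p x' (p z e)) e" unfolding T_def by (rule rc)
    also have "\<dots> = T (p z (p x' e))" unfolding T_def using lc by simp
    also have "\<dots> = T (p z x)" unfolding x' T_def ..
    finally show ?thesis using 1 2 by simp
  qed
  define \<pi> where "\<pi> u = u - S (SOME w. S u = S (S w))" for u
  have P1: "S (\<pi> u) = 0" for u
  proof -
    have "S u = S (S (SOME w. S u = S (S w)))" using someI_ex[OF Na[of u, folded S_def]] .
    then show ?thesis unfolding \<pi>_def using lin_diff[OF linS] by simp
  qed
  have P2: "u - \<pi> u \<in> range S" for u unfolding \<pi>_def by simp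
  have rS: "subspace (range S)" by (rule lin_range[OF linS])
  have P3: "\<pi> u = a" if "S a = 0" "b \<in> range S" "u = a + b" for u a b
  proof -
    have "\<pi> u - a = b - (u - \<pi> u)" using that by (simp add: algebra_simps)
    also have "\<dots> \<in> range S" using subspace_diff[OF rS that(2) P2] .
    finally have "\<pi> u - a \<in> range S" .
    moreover have "S (\<pi> u - a) = 0" using P1 that lin_diff[OF linS] by simp
    ultimately show ?thesis using uniq[of "\<pi> u - a"] by simp
  qed
  have lin\<pi>: "lin \<pi>"
  proof -
    have "\<pi> (x + y) = \<pi> x + \<pi> y" for x y
    proof (rule P3)
      show "S (\<pi> x + \<pi> y) = 0" using P1 lin_add[OF linS] by simp
      show "(x - \<pi> x) + (y - \<pi> y) \<in> range S" using subspace_add[OF rS P2 P2] .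
      show "x + y = (\<pi> x + \<pi> y) + ((x - \<pi> x) + (y - \<pi> y))" by (simp add: algebra_simps)
    qed
    moreover have "\<pi> (c *s x) = c *s \<pi> x" for c x
    proof (rule P3)
      show "S (c *s \<pi> x) = 0" using P1 lin_scale[OF linS] by simp
      show "c *s (x - \<pi> x) \<in> range S" using subspace_scale[OF rS P2] .
      show "c *s x = c *s \<pi> x + c *s (x - \<pi> x)" by (simp add: scale_right_diff_distrib)
    qed
    ultimately show ?thesis unfolding lin_def by blast
  qed
  define q where "q x y = p x (\<pi> y)" for x y
  have pim: "\<pi> (p y (\<pi> z)) = p (\<pi> y) (\<pi> z)" for y z
  proof (rule P3)
    show "S (p (\<pi> y) (\<pi> z)) = 0" using F4 P1 by simp
    show "p (y - \<pi> y) (\<pi> z) \<in> range S" using F6[OF P2] .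
    show "p y (\<pi> z) = p (\<pi> y) (\<pi> z) + p (y - \<pi> y) (\<pi> z)"
      using pR_add[of "\<pi> y" "y - \<pi> y" "\<pi> z"] by simp
  qed
  have Psplit: "p (\<pi> y) (p x (\<pi> z)) = p (\<pi> y) (p (\<pi> x) (\<pi> z))" for x y z
  proof -
    have "p x (\<pi> z) = p (\<pi> x) (\<pi> z) + p (x - \<pi> x) (\<pi> z)"
      using pR_add[of "\<pi> x" "x - \<pi> x" "\<pi> z"] by simp
    then have "p (\<pi> y) (p x (\<pi> z)) = p (\<pi> y) (p (\<pi> x) (\<pi> z)) + p (\<pi> y) (p (x - \<pi> x) (\<pi> z))"
      using pL_add by simp
    moreover have "p (\<pi> y) (p (x - \<pi> x) (\<pi> z)) = 0" using F5[OF P1 F6[OF P2]] .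
    ultimately show ?thesis by simp
  qed
  have qlc: "q x (q y z) = q y (q x z)" for x y z
  proof -
    have "q x (q y z) = p x (p (\<pi> y) (\<pi> z))" unfolding q_def pim ..
    also have "\<dots> = p (\<pi> y) (p x (\<pi> z))" by (rule lc)
    also have "\<dots> = p (\<pi> y) (p (\<pi> x) (\<pi> z))" by (rule Psplit)
    also have "\<dots> = p (\<pi> x) (p (\<pi> y) (\<pi> z))" by (rule lc)
    also have "\<dots> = p (\<pi> x) (p y (\<pi> z))" by (rule Psplit[symmetric])
    also have "\<dots> = p y (p (\<pi> x) (\<pi> z))" by (rule lc)
    also have "\<dots> = q y (q x z)" unfolding q_def pim ..
    finally show ?thesis .
  qed
  have qrc: "q (q x y) z = q (q x z) y" for x y z unfolding q_def by (rule rc)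
  have split1: "p x y = p x (\<pi> y) + p (x - \<pi> x) (y - \<pi> y)" for x y
  proof -
    have "p x y = p x (\<pi> y) + p x (y - \<pi> y)" using pL_add[of x "\<pi> y" "y - \<pi> y"] by simp
    moreover have "p x (y - \<pi> y) = p (\<pi> x) (y - \<pi> y) + p (x - \<pi> x) (y - \<pi> y)"
      using pR_add[of "\<pi> x" "x - \<pi> x" "y - \<pi> y"] by simp
    moreover have "p (\<pi> x) (y - \<pi> y) = 0" using F5[OF P1 P2] .
    ultimately show ?thesis by simp
  qed
  have qbr: "q x y - q y x = br x y" for x y
  proof -
    have "p (x - \<pi> x) (y - \<pi> y) = p (y - \<pi> y) (x - \<pi> x)" using F7[OF P2 P2] .
    then show ?thesis unfolding brp q_def using split1[of x y] split1[of y x] by simp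
  qed
  have qbl: "bilinear_map scale q"
  proof -
    have "\<And>x y z. q (x + y) z = q x z + q y z" unfolding q_def by (rule pR_add)
    moreover have "\<And>x y z. q x (y + z) = q x y + q x z" unfolding q_def using lin_add[OF lin\<pi>] pL_add by simp
    moreover have "\<And>a x y. q (a *s x) y = a *s (q x y)" unfolding q_def using lin_scale[OF linR] by simp
    moreover have "\<And>a x y. q x (a *s y) = a *s (q x y)" unfolding q_def using lin_scale[OF linL] lin_scale[OF lin\<pi>] by simp
    ultimately show ?thesis unfolding bilinear_map_def by blast
  qed
  have qLR: "LR_structure scale br q"
    unfolding LR_structure_def using qbl qlc qrc qbr by blast
  have linad: "lin (\<lambda>z. br y z)" for y
  proof -
    have "(\<lambda>z. br y z) = (\<lambda>z. p y z - p z y)" using brp by auto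
    then show ?thesis using linL linR unfolding lin_def by (simp add: algebra_simps scale_right_diff_distrib)
  qed
  have A1nil: "\<exists>m. ((\<lambda>z. q z y)^^m) a = 0" if a1: "a \<in> range S" for a y
  proof -
    define y0 where "y0 = \<pi> y"
    have sy0: "S y0 = 0" unfolding y0_def by (rule P1)
    define nad where "nad = (\<lambda>z. - br y0 z)"
    have Rq: "(\<lambda>z. q z y) = (\<lambda>z. p z y0)" unfolding q_def y0_def ..
    have eqA1: "p b y0 = nad b" if "b \<in> range S" for b
      unfolding nad_def brp using F5[OF sy0 that] by simp
    have eqpow: "((\<lambda>z. p z y0)^^m) b = (nad^^m) b" if "b \<in> range S" for b m
      using that
    proof (induction m arbitrary: b)
      case (Suc m)
      have "((\<lambda>z. p z y0)^^Suc m) b = ((\<lambda>z. p z y0)^^m) (p b y0)"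
        by (simp only: funpow_Suc_right comp_apply)
      also have "\<dots> = (nad^^m) (p b y0)" using Suc.IH[OF F6[OF Suc.prems]] .
      also have "\<dots> = (nad^^Suc m) b" using eqA1[OF Suc.prems]
        by (simp only: funpow_Suc_right comp_apply)
      finally show ?case .
    qed simp
    have pm: "(nad^^m) x = ((\<lambda>z. br y0 z)^^m) x \<or> (nad^^m) x = - ((\<lambda>z. br y0 z)^^m) x" for m x
    proof (induction m)
      case (Suc m)
      then show ?case
      proof
        assume "(nad^^m) x = ((\<lambda>z. br y0 z)^^m) x"
        then show ?case unfolding nad_def by simp
      next
        assume "(nad^^m) x = - ((\<lambda>z. br y0 z)^^m) x"
        then show ?case unfolding nad_def using lin_minus[OF linad] by simp
      qed
    qed simp
    obtain m where m: "\<forall>x. ((\<lambda>z. br y0 z)^^m) x = 0" using adnil by blast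
    have "(nad^^m) a = 0" using pm[of m a] m by auto
    then show ?thesis unfolding Rq using eqpow[OF a1] by auto
  qed
  have subs: "Zs p \<subseteq> Zs q"
  proof
    fix u assume u: "u \<in> Zs p"
    show "u \<in> Zs q" unfolding Zs_def mem_Collect_eq
    proof
      fix y
      define y0 where "y0 = \<pi> y"
      obtain n where n: "((\<lambda>z. p z y)^^n) u = 0" using u unfolding Zs_def by blast
      obtain m where m: "((\<lambda>z. q z y)^^m) (u - \<pi> u) = 0" using A1nil[OF P2] by blast
      have Rq: "(\<lambda>z. q z y) = (\<lambda>z. p z y0)" unfolding q_def y0_def ..
      have picomm: "\<pi> (p w y) = p (\<pi> w) y" for w
      proof (rule P3)
        show "S (p (\<pi> w) y) = 0" using F4[OF P1] .
        show "p (w - \<pi> w) y \<in> range S" using F6[OF P2] .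
        show "p w y = p (\<pi> w) y + p (w - \<pi> w) y" using pR_add[of "\<pi> w" "w - \<pi> w" y] by simp
      qed
      have picommk: "\<pi> (((\<lambda>z. p z y)^^k) w) = ((\<lambda>z. p z y)^^k) (\<pi> w)" for k w
        by (induction k) (simp_all add: picomm)
      have A0eq: "p a y = p a y0" if "S a = 0" for a
      proof -
        have "p a y = p a y0 + p a (y - y0)" using pL_add[of a y0 "y - y0"] by simp
        moreover have "p a (y - y0) = 0" unfolding y0_def using F5[OF that P2] .
        ultimately show ?thesis by simp
      qed
      have A0pow: "((\<lambda>z. p z y)^^k) a = ((\<lambda>z. p z y0)^^k) a" if "S a = 0" for a k
        using that
      proof (induction k arbitrary: a)
        case (Suc k)
        have "((\<lambda>z. p z y)^^Suc k) a = ((\<lambda>z. p z y)^^k) (p a y)"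
          by (simp only: funpow_Suc_right comp_apply)
        also have "\<dots> = ((\<lambda>z. p z y0)^^k) (p a y)" using Suc.IH[OF F4[OF Suc.prems]] .
        also have "\<dots> = ((\<lambda>z. p z y0)^^Suc k) a" using A0eq[OF Suc.prems]
          by (simp only: funpow_Suc_right comp_apply)
        finally show ?case .
      qed simp
      have "((\<lambda>z. p z y0)^^n) (\<pi> u) = 0"
        using A0pow[OF P1[of u], of n] picommk[of n u] n lin_0[OF lin\<pi>] by simp
      then have h1: "((\<lambda>z. q z y)^^(n+m)) (\<pi> u) = 0" unfolding Rq
        using funpow_zero_mono[OF linR] by simp
      have h2: "((\<lambda>z. q z y)^^(n+m)) (u - \<pi> u) = 0"
        using funpow_zero_mono[OF _ m] Rq linR by simp
      have l: "lin ((\<lambda>z. q z y)^^(n+m))" unfolding Rq by (rule lin_funpow[OF linR])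
      have "((\<lambda>z. q z y)^^(n+m)) u = ((\<lambda>z. q z y)^^(n+m)) (\<pi> u) + ((\<lambda>z. q z y)^^(n+m)) (u - \<pi> u)"
        using lin_add[OF l, of "\<pi> u" "u - \<pi> u"] by simp
      then show "\<exists>n. ((\<lambda>z. q z y)^^n) u = 0" using h1 h2 by auto
    qed
  qed
  define v1 where "v1 = v - \<pi> v"
  have v1q: "v1 \<in> Zs q" unfolding Zs_def v1_def using A1nil[OF P2] by blast
  have v1p: "v1 \<notin> Zs p"
  proof
    assume "v1 \<in> Zs p"
    then obtain n where n: "(T^^n) v1 = 0" unfolding Zs_def T_def by blast
    have lk: "lin (T^^(N+n))" by (rule lin_funpow[OF linT])
    have "(T^^(N+n)) v1 = 0" using n funpow_split[where f=T and a=N and b=n and x=v1] lin_0[OF lin_funpow[OF linT]] by simp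
    moreover have "(T^^(n+N)) (\<pi> v) = 0" using funpow_split[where f=T and a=n and b=N] P1[of v] lin_0[OF lin_funpow[OF linT]] unfolding S_def by simp
    moreover have "v = \<pi> v + v1" unfolding v1_def by simp
    ultimately have "(T^^(N+n)) v = 0" using lin_add[OF lk, of "\<pi> v" v1] by (simp add: add.commute)
    then show False using v unfolding T_def by blast
  qed
  show ?thesis using qLR subs v1q v1p by blast
qed

end


context finite_dimensional_vector_space begin

lemma reach:
  assumes "LR_structure scale br p"
    and adnil: "\<And>y. \<exists>n. \<forall>x. ((\<lambda>z. br y z)^^n) x = 0"
  shows "\<exists>q. LR_structure scale br q \<and> Zs q = UNIV"
  using assms(1)
proof (induction "dimension - dim (Zs p)" arbitrary: p rule: less_induct)
  case less
  show ?case
  proof (cases "Zs p = UNIV")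
    case True then show ?thesis using less.prems by blast
  next
    case False
    then obtain v where "v \<notin> Zs p" by blast
    then obtain e where e: "\<forall>n. ((\<lambda>z. p z e)^^n) v \<noteq> 0" unfolding Zs_def by blast
    obtain q where q: "LR_structure scale br q" "Zs p \<subset> Zs q"
      using step[OF less.prems adnil e] by blast
    have sp: "subspace (Zs p)" "subspace (Zs q)"
      using Zs_subspace less.prems q(1) unfolding LR_structure_def by blast+
    have "dim (Zs p) < dim (Zs q)" by (metis dim_psubset span_eq_iff q(2) sp)
    moreover have "dim (Zs q) \<le> dimension" by (rule dim_subset_UNIV)
    ultimately have "dimension - dim (Zs q) < dimension - dim (Zs p)" by linarith
    then show ?thesis using less.hyps q(1) by blast
  qed
qed

lemma uniform_n:
  assumes "finite B" "\<forall>b\<in>B. \<exists>n. (f^^n) b = 0" "lin f"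
  shows "\<exists>n. \<forall>b\<in>B. (f^^n) b = 0"
  using assms
proof (induction B rule: finite_induct)
  case empty then show ?case by simp
next
  case (insert b B)
  then obtain n where n: "\<forall>c\<in>B. (f^^n) c = 0" by blast
  obtain m where m: "(f^^m) b = 0" using insert.prems by blast
  have "\<forall>c\<in>insert b B. (f^^(max n m)) c = 0"
    using n m funpow_zero_mono[OF insert.prems(2)] by (metis insertE max.cobounded1 max.cobounded2)
  then show ?case by blast
qed

lemma complete_of:
  assumes LR: "LR_structure scale br q" and Z: "Zs q = UNIV"
  shows "complete_LR_structure scale br q"
  unfolding complete_LR_structure_def
proof (intro conjI allI)
  show "LR_structure scale br q" by (rule LR)
  fix x
  have l: "lin (\<lambda>y. q y x)" using bil_linR LR unfolding LR_structure_def by blast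
  have "\<forall>b\<in>Basis. \<exists>n. ((\<lambda>y. q y x)^^n) b = 0" using Z unfolding Zs_def by auto
  then obtain n where n: "\<forall>b\<in>Basis. ((\<lambda>y. q y x)^^n) b = 0"
    using uniform_n[OF finite_Basis _ l] by blast
  have "span Basis \<subseteq> {u. ((\<lambda>y. q y x)^^n) u = 0}"
    by (rule span_minimal) (use n lin_ker[OF lin_funpow[OF l]] in auto)
  then have "((\<lambda>y. q y x)^^n) = (\<lambda>_. 0)" using span_Basis by auto
  then show "\<exists>n. ((\<lambda>y. q y x)^^n) = (\<lambda>_. 0)" by blast
qed

end

theorem mainTheorem3:
  fixes scale :: "'k::field_char_0 \<Rightarrow> 'v::ab_group_add \<Rightarrow> 'v"
    and br :: "'v \<Rightarrow> 'v \<Rightarrow> 'v"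
  assumes "lie_algebra scale br"
    and "finite_dimensional scale"
    and "nilpotent_lie scale br"
    and "\<exists>p. LR_structure scale br p"
  shows "\<exists>q. complete_LR_structure scale br q"
proof -
  interpret vs: vector_space scale using assms(1) unfolding lie_algebra_def by blast
  obtain B where B: "finite B" "vs.span B = UNIV" using assms(2) unfolding finite_dimensional_def by blast
  obtain B' where B': "B' \<subseteq> B" "vs.independent B'" "B \<subseteq> vs.span B'"
    using vs.maximal_independent_subset[of B] by blast
  have "vs.span B' = UNIV" using B B'(3) vs.span_mono vs.span_span
    by (metis top.extremum_uniqueI)
  then interpret fd: finite_dimensional_vector_space scale B'
    using B' B by unfold_locales (auto intro: finite_subset)
  obtain N where N: "lower_central_series scale br N = {0}"
    using assms(3) unfolding nilpotent_lie_def by blast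
  have lcs: "((\<lambda>z. br y z)^^k) x \<in> lower_central_series scale br k" for y x k
  proof (induction k)
    case (Suc k)
    then have "br y (((\<lambda>z. br y z)^^k) x) \<in> {br x y | x y. y \<in> lower_central_series scale br k}"
      by blast
    then show ?case by (simp add: vs.span_base)
  qed simp
  have adnil: "\<And>y. \<exists>n. \<forall>x. ((\<lambda>z. br y z)^^n) x = 0"
    using lcs N by blast
  obtain p where p: "LR_structure scale br p" using assms(4) by blast
  obtain q where "LR_structure scale br q" "vs.Zs q = UNIV" using fd.reach[OF p adnil] by blast
  then show ?thesis using fd.complete_of by blast
qed


end
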